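(* Let $\Gamma=(G,\sigma)$, $G=(V,E)$, be a signed graph and $f:V\to\mathbb R$ a function not identically zero. Let $x$ be a vertex lying in two distinct weak nodal domains $D$ and $D'$ of $f$. Then the set $$B(x)=\{y\in V:\ \text{there exist } m \text{ and a walk } x=x_0\sim x_1\sim\cdots\sim x_m=y \text{ with } f(x_i)=0 \text{ for } i=0,1,\dots,m-1\}$$ is contained in $D\cup D'$ (as vertex sets). In particular, $\{y\in V: y\sim x\}\subseteq D\cup D'$.
   Context: A signed graph is a finite simple undirected graph $G=(V,E)$ with $\sigma:E\to\{+1,-1\}$. A walk is $y_1,\dots,y_m$ ($m\ge2$) with consecutive vertices adjacent. For $f:V\to\mathbb R$, a W-walk of $f$ is a walk such that for any two consecutive nonzeros $y_i,y_j$ along it ($i<j$, $f(y_i)\ne0\ne f(y_j)$, $f(y_l)=0$ for $i<l<j$) one has $f(y_i)\sigma_{y_iy_{i+1}}\cdots\sigma_{y_{j-1}y_j}f(y_j)>0$. On $\Omega=\{x:f(x)\ne0\}$ the relation "$x=y$ or a W-walk connects $x$ and $y$" is an equivalence relation with classes $W_1,\dots,W_q$; the weak nodal domains of $f$ are the induced subgraphs on $W_i^0=W_i\cup\{x\in V:\text{there is a W-walk from } x \text{ to some vertex of } W_i\}$. *)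

theory Defs
  imports Complex_Main
begin

definition signed_graph :: "'a set \<Rightarrow> ('a \<Rightarrow> 'a \<Rightarrow> bool) \<Rightarrow> ('a \<Rightarrow> 'a \<Rightarrow> real) \<Rightarrow> bool" where
  "signed_graph V E \<sigma> \<longleftrightarrow> finite V
     \<and> (\<forall>x y. E x y \<longrightarrow> x \<in> V \<and> y \<in> V)
     \<and> (\<forall>x y. E x y \<longrightarrow> E y x)
     \<and> (\<forall>x. \<not> E x x)
     \<and> (\<forall>x y. E x y \<longrightarrow> \<sigma> x y = \<sigma> y x \<and> (\<sigma> x y = 1 \<or> \<sigma> x y = -1))"

definition is_walk :: "('a \<Rightarrow> 'a \<Rightarrow> bool) \<Rightarrow> 'a list \<Rightarrow> bool" where
  "is_walk E ys \<longleftrightarrow> length ys \<ge> 2 \<and> (\<forall>i. Suc i < length ys \<longrightarrow> E (ys ! i) (ys ! Suc i))"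

definition sign_prod :: "('a \<Rightarrow> 'a \<Rightarrow> real) \<Rightarrow> 'a list \<Rightarrow> nat \<Rightarrow> nat \<Rightarrow> real" where
  "sign_prod \<sigma> ys i j = (\<Prod>l\<in>{i..<j}. \<sigma> (ys ! l) (ys ! Suc l))"

definition is_W_walk :: "('a \<Rightarrow> 'a \<Rightarrow> bool) \<Rightarrow> ('a \<Rightarrow> 'a \<Rightarrow> real) \<Rightarrow> ('a \<Rightarrow> real) \<Rightarrow> 'a list \<Rightarrow> bool" where
  "is_W_walk E \<sigma> f ys \<longleftrightarrow> is_walk E ys \<and>
     (\<forall>i j. i < j \<and> j < length ys \<and> f (ys ! i) \<noteq> 0 \<and> f (ys ! j) \<noteq> 0
        \<and> (\<forall>l. i < l \<and> l < j \<longrightarrow> f (ys ! l) = 0)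
        \<longrightarrow> f (ys ! i) * sign_prod \<sigma> ys i j * f (ys ! j) > 0)"

definition W_walk_from_to :: "('a \<Rightarrow> 'a \<Rightarrow> bool) \<Rightarrow> ('a \<Rightarrow> 'a \<Rightarrow> real) \<Rightarrow> ('a \<Rightarrow> real) \<Rightarrow> 'a \<Rightarrow> 'a \<Rightarrow> bool" where
  "W_walk_from_to E \<sigma> f x y \<longleftrightarrow> (\<exists>ys. is_W_walk E \<sigma> f ys \<and> hd ys = x \<and> last ys = y)"

definition W_class :: "'a set \<Rightarrow> ('a \<Rightarrow> 'a \<Rightarrow> bool) \<Rightarrow> ('a \<Rightarrow> 'a \<Rightarrow> real) \<Rightarrow> ('a \<Rightarrow> real) \<Rightarrow> 'a \<Rightarrow> 'a set" where
  "W_class V E \<sigma> f w = {y \<in> V. f y \<noteq> 0 \<and> (y = w \<or> W_walk_from_to E \<sigma> f w y)}"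

definition weak_nodal_domain :: "'a set \<Rightarrow> ('a \<Rightarrow> 'a \<Rightarrow> bool) \<Rightarrow> ('a \<Rightarrow> 'a \<Rightarrow> real) \<Rightarrow> ('a \<Rightarrow> real) \<Rightarrow> 'a set \<Rightarrow> bool" where
  "weak_nodal_domain V E \<sigma> f D \<longleftrightarrow> (\<exists>w \<in> V. f w \<noteq> 0 \<and>
     D = W_class V E \<sigma> f w \<union> {x \<in> V. \<exists>z \<in> W_class V E \<sigma> f w. W_walk_from_to E \<sigma> f x z})"

definition B_set :: "('a \<Rightarrow> 'a \<Rightarrow> bool) \<Rightarrow> ('a \<Rightarrow> real) \<Rightarrow> 'a \<Rightarrow> 'a set" where
  "B_set E f x = {y. \<exists>xs. xs \<noteq> [] \<and> hd xs = x \<and> last xs = y \<and>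
     (\<forall>i. Suc i < length xs \<longrightarrow> E (xs ! i) (xs ! Suc i) \<and> f (xs ! i) = 0)}"

end

theory Submission
  imports Defs
begin

locale sg =
  fixes E :: "'a \<Rightarrow> 'a \<Rightarrow> bool" and \<sigma> :: "'a \<Rightarrow> 'a \<Rightarrow> real" and f :: "'a \<Rightarrow> real"
  assumes esym: "E a b \<Longrightarrow> E b a"
    and ssym: "E a b \<Longrightarrow> \<sigma> a b = \<sigma> b a"
    and spm: "E a b \<Longrightarrow> \<sigma> a b = 1 \<or> \<sigma> a b = -1"
begin

definition chain :: "'a list \<Rightarrow> bool" where
  "chain ys \<longleftrightarrow> (\<forall>i. Suc i < length ys \<longrightarrow> E (ys!i) (ys!Suc i))"

abbreviation sp where "sp ys i j \<equiv> sign_prod \<sigma> ys i j"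

definition g :: "'a list \<Rightarrow> nat \<Rightarrow> real" where
  "g ys i = f (ys!i) * sp ys 0 i"

lemma walk_chain: "is_walk E ys \<longleftrightarrow> length ys \<ge> 2 \<and> chain ys"
  by (simp add: is_walk_def chain_def)

lemma sp_split: "i \<le> j \<Longrightarrow> j \<le> k \<Longrightarrow> sp ys i k = sp ys i j * sp ys j k"
  unfolding sign_prod_def by (simp add: prod.atLeastLessThan_concat)

lemma sp_Suc: "i \<le> j \<Longrightarrow> sp ys i (Suc j) = sp ys i j * \<sigma> (ys!j) (ys!Suc j)"
  unfolding sign_prod_def by (simp add: prod.atLeastLessThan_Suc)

lemma sp_triv: "j \<le> i \<Longrightarrow> sp ys i j = 1"
  unfolding sign_prod_def by simp

lemma sp_pm: "chain ys \<Longrightarrow> j < length ys \<Longrightarrow> sp ys i j = 1 \<or> sp ys i j = -1"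
proof (induction j)
  case 0 then show ?case by (simp add: sp_triv)
next
  case (Suc j)
  show ?case
  proof (cases "i \<le> j")
    case True
    have "E (ys!j) (ys!Suc j)" using Suc.prems by (simp add: chain_def)
    then have "\<sigma> (ys!j) (ys!Suc j) = 1 \<or> \<sigma> (ys!j) (ys!Suc j) = -1" by (rule spm)
    moreover have "sp ys i j = 1 \<or> sp ys i j = -1" using Suc by simp
    ultimately show ?thesis using sp_Suc[OF True, of ys] by auto
  next
    case False then show ?thesis by (simp add: sp_triv)
  qed
qed

lemma sp_sq: "chain ys \<Longrightarrow> j < length ys \<Longrightarrow> sp ys i j * sp ys i j = 1"
  using sp_pm[of ys j i] by auto

lemma W_char: "is_W_walk E \<sigma> f ys \<longleftrightarrow> is_walk E ys \<and>
   (\<exists>\<epsilon>. (\<epsilon> = 1 \<or> \<epsilon> = -1) \<and> (\<forall>i<length ys. 0 \<le> \<epsilon> * g ys i))"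
proof
  assume W: "is_W_walk E \<sigma> f ys"
  then have wk: "is_walk E ys" and ch: "chain ys" by (auto simp: is_W_walk_def walk_chain)
  have key: "\<forall>i j. j - i = d \<longrightarrow> i < j \<longrightarrow> j < length ys \<longrightarrow> f (ys!i) \<noteq> 0 \<longrightarrow> f (ys!j) \<noteq> 0
     \<longrightarrow> g ys i * g ys j > 0" for d
  proof (induction d rule: less_induct)
    case (less d)
    show ?case
    proof (intro allI impI)
      fix i j assume d: "j - i = d" and ij: "i < j" and jl: "j < length ys"
        and fi: "f (ys!i) \<noteq> 0" and fj: "f (ys!j) \<noteq> 0"
      have spl: "sp ys 0 j = sp ys 0 i * sp ys i j" using sp_split[of 0 i j ys] ij by simp
      have sq: "sp ys 0 i * sp ys 0 i = 1" using sp_sq[OF ch, of i 0] ij jl by simp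
      show "g ys i * g ys j > 0"
      proof (cases "\<forall>l. i < l \<and> l < j \<longrightarrow> f (ys!l) = 0")
        case True
        then have "f (ys!i) * sp ys i j * f (ys!j) > 0"
          using W ij jl fi fj unfolding is_W_walk_def by blast
        moreover have "g ys i * g ys j = f (ys!i) * sp ys i j * f (ys!j) * (sp ys 0 i * sp ys 0 i)"
          unfolding g_def spl by (simp add: algebra_simps)
        ultimately show ?thesis using sq by simp
      next
        case False
        then obtain l where l: "i < l" "l < j" "f (ys!l) \<noteq> 0" by blast
        have a: "g ys i * g ys l > 0" using less.IH[of "l - i"] d l ij jl fi by auto
        have b: "g ys l * g ys j > 0" using less.IH[of "j - l"] d l ij jl fj by auto
        have "(g ys i * g ys j) * (g ys l * g ys l) > 0"
          using mult_pos_pos[OF a b] by (simp add: algebra_simps)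
        moreover have "g ys l * g ys l \<ge> 0" by simp
        ultimately show ?thesis by (simp add: zero_less_mult_iff)
      qed
    qed
  qed
  have key2: "g ys i * g ys j > 0" if "i < length ys" "j < length ys" "f (ys!i) \<noteq> 0" "f (ys!j) \<noteq> 0" for i j
  proof -
    have gi: "g ys i \<noteq> 0" using that sp_pm[OF ch, of i 0] by (auto simp: g_def)
    show ?thesis
    proof (cases i j rule: linorder_cases)
      case less then show ?thesis using key[of "j - i"] that by blast
    next
      case equal then show ?thesis using gi by (auto simp add: zero_less_mult_iff linorder_neq_iff)
    next
      case greater
      then have "g ys j * g ys i > 0" using key[of "i - j"] that by blast
      then show ?thesis by (simp add: mult.commute)
    qed
  qed
  show "is_walk E ys \<and> (\<exists>\<epsilon>. (\<epsilon> = 1 \<or> \<epsilon> = -1) \<and> (\<forall>i<length ys. 0 \<le> \<epsilon> * g ys i))"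
  proof (cases "\<exists>i0<length ys. f (ys!i0) \<noteq> 0")
    case True
    then obtain i0 where i0: "i0 < length ys" "f (ys!i0) \<noteq> 0" by blast
    define \<epsilon> :: real where "\<epsilon> = (if g ys i0 > 0 then 1 else -1)"
    have "0 \<le> \<epsilon> * g ys i" if "i < length ys" for i
    proof (cases "f (ys!i) = 0")
      case True then show ?thesis by (simp add: g_def)
    next
      case False
      have "g ys i0 * g ys i > 0" using key2[OF i0(1) that i0(2) False] .
      then show ?thesis unfolding \<epsilon>_def by (auto simp: zero_less_mult_iff)
    qed
    moreover have "\<epsilon> = 1 \<or> \<epsilon> = -1" unfolding \<epsilon>_def by auto
    ultimately show ?thesis using wk by blast
  next
    case False
    then show ?thesis using wk by (auto simp: g_def intro!: exI[of _ 1])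
  qed
next
  assume A: "is_walk E ys \<and> (\<exists>\<epsilon>. (\<epsilon> = 1 \<or> \<epsilon> = -1) \<and> (\<forall>i<length ys. 0 \<le> \<epsilon> * g ys i))"
  then have wk: "is_walk E ys" and ch: "chain ys" by (auto simp: walk_chain)
  from A obtain \<epsilon> where e: "\<epsilon> = 1 \<or> \<epsilon> = -1" and ge: "\<forall>i<length ys. 0 \<le> \<epsilon> * g ys i" by blast
  show "is_W_walk E \<sigma> f ys"
    unfolding is_W_walk_def
  proof (intro conjI wk allI impI)
    fix i j assume H: "i < j \<and> j < length ys \<and> f (ys ! i) \<noteq> 0 \<and> f (ys ! j) \<noteq> 0
        \<and> (\<forall>l. i < l \<and> l < j \<longrightarrow> f (ys ! l) = 0)"
    have spl: "sp ys 0 j = sp ys 0 i * sp ys i j" using sp_split[of 0 i j ys] H by simp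
    have sq: "sp ys 0 i * sp ys 0 i = 1" using sp_sq[OF ch, of i 0] H by simp
    have p1: "sp ys 0 i \<noteq> 0" using sq by auto
    have p2: "sp ys i j \<noteq> 0" using sp_pm[OF ch, of j i] H by auto
    have e0: "\<epsilon> \<noteq> 0" using e by auto
    have "0 \<le> \<epsilon> * g ys i" "0 \<le> \<epsilon> * g ys j" using ge H by auto
    moreover have "\<epsilon> * g ys i \<noteq> 0" "\<epsilon> * g ys j \<noteq> 0" using e0 H p1 p2 spl by (auto simp: g_def)
    ultimately have gi: "\<epsilon> * g ys i > 0" and gj: "\<epsilon> * g ys j > 0" by (metis less_eq_real_def)+
    have "(\<epsilon> * g ys i) * (\<epsilon> * g ys j) = f (ys!i) * sp ys i j * f (ys!j) * (\<epsilon>*\<epsilon>) * (sp ys 0 i * sp ys 0 i)"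
      unfolding g_def spl by (simp add: algebra_simps)
    also have "\<dots> = f (ys!i) * sp ys i j * f (ys!j)" using sq e by auto
    finally show "f (ys!i) * sp ys i j * f (ys!j) > 0" using mult_pos_pos[OF gi gj] by simp
  qed
qed

lemma app_nth1: "i < length ys \<Longrightarrow> (ys @ tl zs) ! i = ys ! i"
  by (simp add: nth_append)

lemma app_nth2:
  assumes "ys \<noteq> []" "zs \<noteq> []" "last ys = hd zs" "k < length zs"
  shows "(ys @ tl zs) ! (length ys - 1 + k) = zs ! k"
proof (cases k)
  case 0
  then show ?thesis using assms by (simp add: nth_append last_conv_nth hd_conv_nth)
next
  case (Suc k')
  have a: "length ys - 1 + k = length ys + k'" using assms(1) Suc by (cases ys) auto
  have "(ys @ tl zs) ! (length ys + k') = tl zs ! k'" by (rule nth_append_length_plus)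
  also have "\<dots> = zs ! k" using assms(2,4) Suc by (simp add: nth_tl)
  finally show ?thesis using a by simp
qed

lemma app_chain:
  assumes "ys \<noteq> []" "zs \<noteq> []" "last ys = hd zs" "chain ys" "chain zs"
  shows "chain (ys @ tl zs)"
  unfolding chain_def
proof (intro allI impI)
  fix i assume i: "Suc i < length (ys @ tl zs)"
  show "E ((ys @ tl zs) ! i) ((ys @ tl zs) ! Suc i)"
  proof (cases "Suc i < length ys")
    case True then show ?thesis using assms(4) by (simp add: app_nth1 chain_def)
  next
    case False
    define k where "k = i - (length ys - 1)"
    have ik: "i = length ys - 1 + k" and sik: "Suc i = length ys - 1 + Suc k"
      using False assms(1) unfolding k_def by (auto)
    have kl: "Suc k < length zs" using i ik assms(1,2) by auto
    have "(ys @ tl zs) ! i = zs ! k" using ik app_nth2[OF assms(1-3)] kl by simp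
    moreover have "(ys @ tl zs) ! Suc i = zs ! Suc k" using sik app_nth2[OF assms(1-3), of "Suc k"] kl by simp
    ultimately show ?thesis using kl assms(5) by (simp add: chain_def)
  qed
qed

lemma app_sp1:
  assumes "i < length ys"
  shows "sp (ys @ tl zs) 0 i = sp ys 0 i"
  unfolding sign_prod_def using assms by (intro prod.cong) (auto simp: app_nth1)

lemma app_sp2:
  assumes "ys \<noteq> []" "zs \<noteq> []" "last ys = hd zs" "k < length zs"
  shows "sp (ys @ tl zs) (length ys - 1) (length ys - 1 + k) = sp zs 0 k"
  using assms(4)
proof (induction k)
  case 0 then show ?case by (simp add: sp_triv)
next
  case (Suc k)
  have "sp (ys @ tl zs) (length ys - 1) (length ys - 1 + Suc k)
     = sp (ys @ tl zs) (length ys - 1) (length ys - 1 + k) *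
       \<sigma> ((ys @ tl zs) ! (length ys - 1 + k)) ((ys @ tl zs) ! Suc (length ys - 1 + k))"
    using sp_Suc[of "length ys - 1" "length ys - 1 + k" "ys @ tl zs"] by simp
  also have "\<dots> = sp zs 0 k * \<sigma> (zs ! k) (zs ! Suc k)"
    using Suc app_nth2[OF assms(1-3), of k] app_nth2[OF assms(1-3), of "Suc k"] by simp
  also have "\<dots> = sp zs 0 (Suc k)" using sp_Suc[of 0 k zs] by simp
  finally show ?case .
qed

lemma app_W:
  assumes "ys \<noteq> []" "zs \<noteq> []" "last ys = hd zs" "chain ys" "chain zs"
    and len: "length (ys @ tl zs) \<ge> 2"
    and e: "\<epsilon> = 1 \<or> \<epsilon> = -1"
    and c1: "\<forall>i<length ys. 0 \<le> \<epsilon> * g ys i"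
    and c2: "\<forall>k<length zs. 0 \<le> \<epsilon> * sp ys 0 (length ys - 1) * g zs k"
  shows "is_W_walk E \<sigma> f (ys @ tl zs)"
  unfolding W_char walk_chain
proof (intro conjI len app_chain[OF assms(1-5)] exI[of _ \<epsilon>] e allI impI)
  fix p assume p: "p < length (ys @ tl zs)"
  show "0 \<le> \<epsilon> * g (ys @ tl zs) p"
  proof (cases "p < length ys")
    case True then show ?thesis using c1 by (simp add: g_def app_nth1 app_sp1)
  next
    case False
    define k where "k = p - (length ys - 1)"
    have pk: "p = length ys - 1 + k" using False assms(1) unfolding k_def by auto
    have l0: "length ys > 0" "length zs > 0" using assms(1,2) by auto
    have "length (ys @ tl zs) = length ys + length zs - 1" using l0 by (simp del: length_greater_0_conv)
    then have kl: "k < length zs" using p pk l0 by linarith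
    have "sp (ys @ tl zs) 0 p = sp (ys @ tl zs) 0 (length ys - 1) * sp (ys @ tl zs) (length ys - 1) p"
      using sp_split[of 0 "length ys - 1" p] pk by simp
    also have "\<dots> = sp ys 0 (length ys - 1) * sp zs 0 k"
      using app_sp1[of "length ys - 1" ys zs] assms(1) app_sp2[OF assms(1-3) kl] pk by simp
    finally have "g (ys @ tl zs) p = sp ys 0 (length ys - 1) * g zs k"
      unfolding g_def using app_nth2[OF assms(1-3) kl] pk by simp
    then show ?thesis using c2 kl by (simp add: mult.assoc)
  qed
qed

lemma rev_chain: "chain ys \<Longrightarrow> chain (rev ys)"
  unfolding chain_def
proof (intro allI impI)
  fix i assume c: "\<forall>i. Suc i < length ys \<longrightarrow> E (ys ! i) (ys ! Suc i)" and i: "Suc i < length (rev ys)"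
  have "E (ys ! (length ys - Suc (Suc i))) (ys ! Suc (length ys - Suc (Suc i)))" using c i by auto
  moreover have "Suc (length ys - Suc (Suc i)) = length ys - Suc i" using i by auto
  ultimately show "E (rev ys ! i) (rev ys ! Suc i)" using i by (simp add: rev_nth esym)
qed

lemma rev_sp:
  assumes "chain ys" "i < length ys"
  shows "sp (rev ys) 0 i = sp ys (length ys - 1 - i) (length ys - 1)"
  using assms(2)
proof (induction i)
  case 0 then show ?case by (simp add: sp_triv)
next
  case (Suc i)
  let ?n = "length ys"
  have e: "E (ys ! (?n - 1 - Suc i)) (ys ! Suc (?n - 1 - Suc i))" using assms(1) Suc.prems
    by (simp add: chain_def)
  have s1: "Suc (?n - 1 - Suc i) = ?n - 1 - i" using Suc.prems by auto
  have "sp (rev ys) 0 (Suc i) = sp (rev ys) 0 i * \<sigma> (rev ys ! i) (rev ys ! Suc i)"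
    using sp_Suc[of 0 i] by simp
  also have "\<dots> = sp ys (?n - 1 - i) (?n - 1) * \<sigma> (ys ! (?n - 1 - i)) (ys ! (?n - 1 - Suc i))"
    using Suc by (simp add: rev_nth)
  also have "\<sigma> (ys ! (?n - 1 - i)) (ys ! (?n - 1 - Suc i)) = sp ys (?n - 1 - Suc i) (?n - 1 - i)"
    using ssym[OF e] s1 sp_Suc[of "?n - 1 - Suc i" "?n - 1 - Suc i" ys] by (simp add: sp_triv)
  also have "sp ys (?n - 1 - i) (?n - 1) * sp ys (?n - 1 - Suc i) (?n - 1 - i) = sp ys (?n - 1 - Suc i) (?n - 1)"
    using sp_split[of "?n - 1 - Suc i" "?n - 1 - i" "?n - 1" ys] Suc.prems by simp
  finally show ?case .
qed

lemma rev_g: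
  assumes "chain ys" "i < length ys"
  shows "g (rev ys) i = g ys (length ys - 1 - i) * sp ys 0 (length ys - 1)"
proof -
  let ?n = "length ys" let ?m = "?n - 1 - i"
  have "sp ys 0 (?n - 1) = sp ys 0 ?m * sp ys ?m (?n - 1)" using sp_split[of 0 ?m "?n - 1" ys] by simp
  then have "sp ys 0 ?m * sp ys 0 (?n - 1) = (sp ys 0 ?m * sp ys 0 ?m) * sp ys ?m (?n - 1)" by simp
  also have "sp ys 0 ?m * sp ys 0 ?m = 1" using sp_sq[OF assms(1), of ?m 0] assms(2) by simp
  finally have "sp ys ?m (?n - 1) = sp ys 0 ?m * sp ys 0 (?n - 1)" by simp
  then show ?thesis unfolding g_def using rev_sp[OF assms] assms(2) by (simp add: rev_nth)
qed

lemma rev_sp_tot: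
  assumes "chain ys" "ys \<noteq> []"
  shows "sp (rev ys) 0 (length ys - 1) = sp ys 0 (length ys - 1)"
  using rev_sp[OF assms(1), of "length ys - 1"] assms(2) by simp

lemma Wwalk_E:
  assumes "W_walk_from_to E \<sigma> f a b"
  obtains ys \<epsilon> where "hd ys = a" "last ys = b" "chain ys" "length ys \<ge> 2"
    "\<epsilon> = 1 \<or> \<epsilon> = -1" "\<forall>i<length ys. 0 \<le> \<epsilon> * g ys i"
  using assms unfolding W_walk_from_to_def W_char walk_chain by blast

lemma pm_cases: "(e::real) = 1 \<or> e = -1 \<Longrightarrow> e * e = 1" by auto

lemma W_trans:
  assumes ab: "W_walk_from_to E \<sigma> f a b" and bc: "W_walk_from_to E \<sigma> f b c" and fb: "f b \<noteq> 0"
  shows "W_walk_from_to E \<sigma> f a c"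
proof -
  obtain P e1 where P: "hd P = a" "last P = b" "chain P" "length P \<ge> 2"
    "e1 = 1 \<or> e1 = -1" "\<forall>i<length P. 0 \<le> e1 * g P i" using ab by (rule Wwalk_E)
  obtain Q e2 where Q: "hd Q = b" "last Q = c" "chain Q" "length Q \<ge> 2"
    "e2 = 1 \<or> e2 = -1" "\<forall>i<length Q. 0 \<le> e2 * g Q i" using bc by (rule Wwalk_E)
  let ?n = "length P" let ?s = "sp P 0 (?n - 1)"
  have Pne: "P \<noteq> []" and Qne: "Q \<noteq> []" using P Q by auto
  have s: "?s = 1 \<or> ?s = -1" using sp_pm[OF P(3), of "?n - 1" 0] Pne by simp
  have gP: "g P (?n - 1) = f b * ?s" using P(2) Pne by (simp add: g_def last_conv_nth)
  have gQ: "g Q 0 = f b" using Q(1) Qne by (simp add: g_def hd_conv_nth sp_triv)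
  have A: "0 \<le> e1 * (f b * ?s)" using P(6) gP Pne by (metis diff_less length_greater_0_conv zero_less_one)
  have B: "0 \<le> e2 * f b" using Q(6) gQ Qne by auto
  have eq: "e1 * ?s = e2" using A B s P(5) Q(5) fb by auto
  have W: "is_W_walk E \<sigma> f (P @ tl Q)"
    by (rule app_W[OF Pne Qne _ P(3) Q(3) _ P(5) P(6)]) (use P Q eq in auto)
  moreover have "hd (P @ tl Q) = a" using P Pne by simp
  moreover have "last (P @ tl Q) = c" using Q by (cases Q) auto
  ultimately show ?thesis unfolding W_walk_from_to_def by blast
qed

lemma W_sym:
  assumes ab: "W_walk_from_to E \<sigma> f a b"
  shows "W_walk_from_to E \<sigma> f b a"
proof -
  obtain P e1 where P: "hd P = a" "last P = b" "chain P" "length P \<ge> 2"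
    "e1 = 1 \<or> e1 = -1" "\<forall>i<length P. 0 \<le> e1 * g P i" using ab by (rule Wwalk_E)
  let ?n = "length P" let ?s = "sp P 0 (?n - 1)"
  have Pne: "P \<noteq> []" using P by auto
  have s: "?s = 1 \<or> ?s = -1" using sp_pm[OF P(3), of "?n - 1" 0] Pne by simp
  have "0 \<le> (e1 * ?s) * g (rev P) i" if "i < length (rev P)" for i
  proof -
    have "(e1 * ?s) * g (rev P) i = e1 * g P (?n - 1 - i) * (?s * ?s)"
      using rev_g[OF P(3), of i] that by simp
    also have "\<dots> = e1 * g P (?n - 1 - i)" using s by auto
    finally have eq: "(e1 * ?s) * g (rev P) i = e1 * g P (?n - 1 - i)" .
    have "?n - 1 - i < ?n" using Pne by simp
    then have "0 \<le> e1 * g P (?n - 1 - i)" using P(6) by blast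
    then show ?thesis unfolding eq .
  qed
  moreover have "e1 * ?s = 1 \<or> e1 * ?s = -1" using s P(5) by auto
  ultimately have "is_W_walk E \<sigma> f (rev P)" unfolding W_char walk_chain
    using rev_chain[OF P(3)] P(4) by auto
  moreover have "hd (rev P) = b" "last (rev P) = a" using P Pne by (auto simp: hd_rev last_rev)
  ultimately show ?thesis unfolding W_walk_from_to_def by blast
qed

lemma B_join:
  assumes R: "chain R" "length R \<ge> 2" "last R = y" "\<forall>i. Suc i < length R \<longrightarrow> f (R!i) = 0"
    and P: "hd P = hd R" "last P = z" "chain P" "length P \<ge> 2" "e = 1 \<or> e = -1"
      "\<forall>i<length P. 0 \<le> e * g P i"
    and sg: "0 \<le> sp R 0 (length R - 1) * e * f y"
  shows "W_walk_from_to E \<sigma> f y z"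
proof -
  let ?n = "length R" let ?s = "sp R 0 (?n - 1)"
  have Rne: "R \<noteq> []" "rev R \<noteq> []" and Pne: "P \<noteq> []" using R P by auto
  have s: "?s = 1 \<or> ?s = -1" using sp_pm[OF R(1), of "?n - 1" 0] Rne by simp
  have c1: "\<forall>i<length (rev R). 0 \<le> (?s * e) * g (rev R) i"
  proof (intro allI impI)
    fix i assume i: "i < length (rev R)"
    have gr: "g (rev R) i = g R (?n - 1 - i) * ?s" using rev_g[OF R(1), of i] i by simp
    show "0 \<le> (?s * e) * g (rev R) i"
    proof (cases i)
      case 0
      have "g R (?n - 1) = f y * ?s" using R(3) Rne by (simp add: g_def last_conv_nth)
      then have "(?s * e) * g (rev R) i = ?s * e * f y * (?s * ?s)" using gr 0 by simp
      also have "\<dots> = ?s * e * f y" using s by auto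
      finally have eq: "(?s * e) * g (rev R) i = ?s * e * f y" .
      show ?thesis unfolding eq using sg .
    next
      case (Suc i')
      have "Suc (?n - 1 - i) < ?n" using Suc i by auto
      then have "f (R ! (?n - 1 - i)) = 0" using R(4) by blast
      then have "g (rev R) i = 0" using gr by (simp add: g_def)
      then show ?thesis by simp
    qed
  qed
  have c2: "\<forall>k<length P. 0 \<le> (?s * e) * sp (rev R) 0 (length (rev R) - 1) * g P k"
  proof (intro allI impI)
    fix k assume k: "k < length P"
    have "(?s * e) * sp (rev R) 0 (length (rev R) - 1) * g P k = e * g P k * (?s * ?s)"
      using rev_sp_tot[OF R(1) Rne(1)] by simp
    also have "\<dots> = e * g P k" using s by auto
    finally have eq: "(?s * e) * sp (rev R) 0 (length (rev R) - 1) * g P k = e * g P k" .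
    show "0 \<le> (?s * e) * sp (rev R) 0 (length (rev R) - 1) * g P k" unfolding eq using P(6) k by blast
  qed
  have l: "last (rev R) = hd P" using P(1) Rne by (simp add: last_rev)
  have e': "?s * e = 1 \<or> ?s * e = -1" using s P(5) by auto
  have W: "is_W_walk E \<sigma> f (rev R @ tl P)"
    by (rule app_W[OF Rne(2) Pne l rev_chain[OF R(1)] P(3) _ e' c1 c2]) (use R in simp)
  moreover have "hd (rev R @ tl P) = y" using R Rne by (simp add: hd_rev)
  moreover have "last (rev R @ tl P) = z" using P by (cases P) auto
  ultimately show ?thesis unfolding W_walk_from_to_def by blast
qed

lemma zz_join:
  assumes P: "hd P = x" "last P = z" "chain P" "length P \<ge> 2" "e = 1 \<or> e = -1"
      "\<forall>i<length P. 0 \<le> e * g P i"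
    and Q: "hd Q = x" "last Q = z'" "chain Q" "length Q \<ge> 2"
      "\<forall>i<length Q. 0 \<le> e * g Q i"
  shows "W_walk_from_to E \<sigma> f z z'"
proof -
  let ?n = "length P" let ?s = "sp P 0 (?n - 1)"
  have Pne: "P \<noteq> []" "rev P \<noteq> []" and Qne: "Q \<noteq> []" using P Q by auto
  have s: "?s = 1 \<or> ?s = -1" using sp_pm[OF P(3), of "?n - 1" 0] Pne by simp
  have c1: "\<forall>i<length (rev P). 0 \<le> (e * ?s) * g (rev P) i"
  proof (intro allI impI)
    fix i assume i: "i < length (rev P)"
    have "(e * ?s) * g (rev P) i = e * g P (?n - 1 - i) * (?s * ?s)"
      using rev_g[OF P(3), of i] i by simp
    also have "\<dots> = e * g P (?n - 1 - i)" using s by auto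
    finally have eq: "(e * ?s) * g (rev P) i = e * g P (?n - 1 - i)" .
    have "?n - 1 - i < ?n" using Pne by simp
    then have "0 \<le> e * g P (?n - 1 - i)" using P(6) by blast
    then show "0 \<le> (e * ?s) * g (rev P) i" unfolding eq .
  qed
  have c2: "\<forall>k<length Q. 0 \<le> (e * ?s) * sp (rev P) 0 (length (rev P) - 1) * g Q k"
  proof (intro allI impI)
    fix k assume k: "k < length Q"
    have "(e * ?s) * sp (rev P) 0 (length (rev P) - 1) * g Q k = e * g Q k * (?s * ?s)"
      using rev_sp_tot[OF P(3) Pne(1)] by simp
    also have "\<dots> = e * g Q k" using s by auto
    finally have eq: "(e * ?s) * sp (rev P) 0 (length (rev P) - 1) * g Q k = e * g Q k" .
    show "0 \<le> (e * ?s) * sp (rev P) 0 (length (rev P) - 1) * g Q k" unfolding eq using Q(5) k by blast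
  qed
  have l: "last (rev P) = hd Q" using P(1) Q(1) Pne by (simp add: last_rev)
  have e': "e * ?s = 1 \<or> e * ?s = -1" using s P(5) by auto
  have W: "is_W_walk E \<sigma> f (rev P @ tl Q)"
    by (rule app_W[OF Pne(2) Qne l rev_chain[OF P(3)] Q(3) _ e' c1 c2]) (use P in simp)
  moreover have "hd (rev P @ tl Q) = z" using P Pne by (simp add: hd_rev)
  moreover have "last (rev P @ tl Q) = z'" using Q by (cases Q) auto
  ultimately show ?thesis unfolding W_walk_from_to_def by blast
qed

definition rel where "rel a b \<longleftrightarrow> a = b \<or> W_walk_from_to E \<sigma> f a b"

lemma rel_sym: "rel a b \<Longrightarrow> rel b a"
  unfolding rel_def using W_sym by blast

lemma rel_trans: "rel a b \<Longrightarrow> rel b c \<Longrightarrow> f b \<noteq> 0 \<Longrightarrow> rel a c"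
  unfolding rel_def using W_trans by blast

lemma class_sub:
  assumes "rel w' w" "f w \<noteq> 0"
  shows "W_class V E \<sigma> f w \<subseteq> W_class V E \<sigma> f w'"
proof
  fix y assume "y \<in> W_class V E \<sigma> f w"
  then have y: "y \<in> V" "f y \<noteq> 0" "rel w y" unfolding W_class_def rel_def by auto
  have "rel w' y" using rel_trans[OF assms(1) y(3) assms(2)] .
  then show "y \<in> W_class V E \<sigma> f w'" using y unfolding W_class_def rel_def by auto
qed

lemma class_eq:
  assumes "rel w w'" "f w \<noteq> 0" "f w' \<noteq> 0"
  shows "W_class V E \<sigma> f w = W_class V E \<sigma> f w'"
  using class_sub[OF assms(1) assms(3)] class_sub[OF rel_sym[OF assms(1)] assms(2)] by blast

lemma in_class_rel: "y \<in> W_class V E \<sigma> f w \<Longrightarrow> rel w y \<and> f y \<noteq> 0"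
  unfolding W_class_def rel_def by auto

end

theorem corollary3p9:
  fixes V :: "'a set" and E :: "'a \<Rightarrow> 'a \<Rightarrow> bool" and \<sigma> :: "'a \<Rightarrow> 'a \<Rightarrow> real"
    and f :: "'a \<Rightarrow> real" and x :: 'a and D D' :: "'a set"
  assumes "signed_graph V E \<sigma>"
    and "\<exists>v \<in> V. f v \<noteq> 0"
    and "x \<in> V"
    and "weak_nodal_domain V E \<sigma> f D" and "weak_nodal_domain V E \<sigma> f D'"
    and "D \<noteq> D'"
    and "x \<in> D" and "x \<in> D'"
  shows "B_set E f x \<subseteq> D \<union> D' \<and> {y \<in> V. E x y} \<subseteq> D \<union> D'"
proof -
  have SG: "signed_graph V E \<sigma>" by fact
  interpret sg E \<sigma> f
    using SG unfolding signed_graph_def by unfold_locales auto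
  have EV: "E a b \<Longrightarrow> a \<in> V \<and> b \<in> V" for a b using SG unfolding signed_graph_def by blast
  let ?C = "W_class V E \<sigma> f"
  obtain w where w: "w \<in> V" "f w \<noteq> 0"
    and Dw: "D = ?C w \<union> {v \<in> V. \<exists>z \<in> ?C w. W_walk_from_to E \<sigma> f v z}"
    using assms(4) unfolding weak_nodal_domain_def by blast
  obtain w' where w': "w' \<in> V" "f w' \<noteq> 0"
    and Dw': "D' = ?C w' \<union> {v \<in> V. \<exists>z \<in> ?C w'. W_walk_from_to E \<sigma> f v z}"
    using assms(5) unfolding weak_nodal_domain_def by blast
  have nrel: "\<not> rel w w'"
  proof
    assume "rel w w'"
    then have "?C w = ?C w'" using class_eq w w' by blast
    then show False using Dw Dw' assms(6) by simp
  qed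
  have fx: "f x = 0"
  proof (rule ccontr)
    assume fx: "f x \<noteq> 0"
    have R: "rel u x" if u: "f u \<noteq> 0" and xD: "x \<in> ?C u \<union> {v \<in> V. \<exists>z \<in> ?C u. W_walk_from_to E \<sigma> f v z}" for u
    proof (cases "x \<in> ?C u")
      case True then show ?thesis using in_class_rel by blast
    next
      case False
      then obtain z where z: "z \<in> ?C u" "W_walk_from_to E \<sigma> f x z" using xD by blast
      have "rel u z" "f z \<noteq> 0" using in_class_rel[OF z(1)] by auto
      moreover have "rel z x" using z(2) rel_sym unfolding rel_def by blast
      ultimately show ?thesis using rel_trans by blast
    qed
    have "rel w x" using R[OF w(2)] assms(7) Dw by blast
    moreover have "rel x w'" using R[OF w'(2)] assms(8) Dw' rel_sym by blast
    ultimately show False using nrel rel_trans fx by blast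
  qed
  have walk_out: "\<exists>z. z \<in> ?C u \<and> W_walk_from_to E \<sigma> f x z"
    if xD: "x \<in> ?C u \<union> {v \<in> V. \<exists>z \<in> ?C u. W_walk_from_to E \<sigma> f v z}" for u
  proof -
    have "x \<notin> ?C u" using fx unfolding W_class_def by auto
    then show ?thesis using xD by blast
  qed
  obtain z where z: "z \<in> ?C w" "W_walk_from_to E \<sigma> f x z" using walk_out assms(7) Dw by blast
  obtain z' where z': "z' \<in> ?C w'" "W_walk_from_to E \<sigma> f x z'" using walk_out assms(8) Dw' by blast
  obtain P eP where P: "hd P = x" "last P = z" "chain P" "length P \<ge> 2"
    "eP = 1 \<or> eP = -1" "\<forall>i<length P. 0 \<le> eP * g P i" using z(2) by (rule Wwalk_E)
  obtain Q eQ where Q: "hd Q = x" "last Q = z'" "chain Q" "length Q \<ge> 2"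
    "eQ = 1 \<or> eQ = -1" "\<forall>i<length Q. 0 \<le> eQ * g Q i" using z'(2) by (rule Wwalk_E)
  have eQ: "eQ = - eP"
  proof (rule ccontr)
    assume "eQ \<noteq> - eP"
    then have "eQ = eP" using P(5) Q(5) by auto
    then have "W_walk_from_to E \<sigma> f z z'" using zz_join[OF P Q(1-4)] Q(6) by simp
    then have "rel z z'" unfolding rel_def by blast
    moreover have "rel w z" "f z \<noteq> 0" using in_class_rel[OF z(1)] by auto
    moreover have "rel w' z'" "f z' \<noteq> 0" using in_class_rel[OF z'(1)] by auto
    ultimately have "rel w w'" using rel_trans rel_sym by blast
    then show False using nrel by blast
  qed
  have B: "B_set E f x \<subseteq> D \<union> D'"
  proof
    fix y assume "y \<in> B_set E f x"
    then obtain R where R: "R \<noteq> []" "hd R = x" "last R = y"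
      "\<forall>i. Suc i < length R \<longrightarrow> E (R ! i) (R ! Suc i) \<and> f (R ! i) = 0"
      unfolding B_set_def by blast
    show "y \<in> D \<union> D'"
    proof (cases "length R \<ge> 2")
      case False
      then have "R = [x]" using R(1,2) by (cases R) (auto simp: Suc_le_eq)
      then show ?thesis using R(3) assms(7) by simp
    next
      case True
      have ch: "chain R" using R(4) by (simp add: chain_def)
      have zs: "\<forall>i. Suc i < length R \<longrightarrow> f (R!i) = 0" using R(4) by blast
      have "E (R ! (length R - 2)) (R ! Suc (length R - 2))" using R(4) True by simp
      moreover have "Suc (length R - 2) = length R - 1" using True by simp
      ultimately have "y \<in> V" using EV R(1,3) by (metis last_conv_nth)
      let ?s = "sp R 0 (length R - 1)"
      have "0 \<le> ?s * eP * f y \<or> 0 \<le> ?s * eQ * f y" using eQ by auto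
      then show ?thesis
      proof
        assume "0 \<le> ?s * eP * f y"
        then have "W_walk_from_to E \<sigma> f y z" using B_join[OF ch True R(3) zs _ P(2-6)] P(1) R(2) by simp
        then show ?thesis using \<open>y \<in> V\<close> z(1) Dw by blast
      next
        assume "0 \<le> ?s * eQ * f y"
        then have "W_walk_from_to E \<sigma> f y z'" using B_join[OF ch True R(3) zs _ Q(2-6)] Q(1) R(2) by simp
        then show ?thesis using \<open>y \<in> V\<close> z'(1) Dw' by blast
      qed
    qed
  qed
  moreover have "{y \<in> V. E x y} \<subseteq> B_set E f x"
  proof
    fix y assume "y \<in> {y \<in> V. E x y}"
    then have "E x y" by simp
    then show "y \<in> B_set E f x" unfolding B_set_def using fx
      by (intro CollectI exI[of _ "[x, y]"]) (auto simp: nth_Cons split: nat.splits)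
  qed
  ultimately show ?thesis by blast
qed

end
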